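(* Let $G$ be the visibility graph of a funnel with chains $L=\{\lambda_0,\dots,\lambda_{n_L}\}$ and $R=\{\rho_0,\dots,\rho_{n_R}\}$. Let $W:=L_\ell\cup R_r$ be a base (with $0\le \ell\le n_L$, $0\le r\le n_R$), and let $d(\ell)\in N[\lambda_\ell]$ and $d(r)\in N[\rho_r]$ be two vertices of $G$. Then at least one of the sets $W\setminus N[d(\ell)]$, $W\setminus N[d(r)]$, or $W\setminus (N[d(\ell)]\cup N[d(r)])$ is a base.
   Context: A terrain is an $x$-monotone polygonal chain given by finitely many vertices with distinct $x$-coordinates; two vertices $p$ (left) and $q$ (right) see each other if every terrain vertex strictly between them in $x$-order lies strictly below segment $pq$; the visibility graph has an edge for every pair that sees each other. An interior terrain vertex is convex if its two chain-neighbors see each other. A funnel is a terrain with exactly one convex vertex (the bottom) whose leftmost and rightmost vertices see each other. The chains: $L=\{\lambda_0,\dots,\lambda_{n_L}\}$ are the bottom and the vertices left of it, $R=\{\rho_0,\dots,\rho_{n_R}\}$ the bottom and the vertices right of it, each ordered by increasing $y$-coordinate, so $\lambda_0=\rho_0$ is the bottom. For integers $-1\le \ell\le n_L$ and $-1\le r\le n_R$ let $L_\ell:=\{\lambda_0,\dots,\lambda_\ell\}$ and $R_r:=\{\rho_0,\dots,\rho_r\}$ (with $L_{-1}=R_{-1}=\emptyset$). A vertex set $U$ is a base if $U=L_\ell\cup R_r$ for some such $\ell,r$. $N[v]$ is the closed neighborhood in $G$. *)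

theory Defs
  imports Complex_Main
begin

definition terrain :: "(nat \<Rightarrow> real \<times> real) \<Rightarrow> nat \<Rightarrow> bool" where
  "terrain p n \<longleftrightarrow> (\<forall>i j. i < j \<and> j \<le> n \<longrightarrow> fst (p i) < fst (p j))"

definition below_seg :: "(nat \<Rightarrow> real \<times> real) \<Rightarrow> nat \<Rightarrow> nat \<Rightarrow> nat \<Rightarrow> bool" where
  "below_seg p i j k \<longleftrightarrow>
     snd (p k) < snd (p i) + (snd (p j) - snd (p i)) * (fst (p k) - fst (p i)) / (fst (p j) - fst (p i))"

definition sees :: "(nat \<Rightarrow> real \<times> real) \<Rightarrow> nat \<Rightarrow> nat \<Rightarrow> bool" where
  "sees p i j \<longleftrightarrow> i < j \<and> (\<forall>k. i < k \<and> k < j \<longrightarrow> below_seg p i j k)"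

definition vis_edge :: "(nat \<Rightarrow> real \<times> real) \<Rightarrow> nat \<Rightarrow> nat \<Rightarrow> nat \<Rightarrow> bool" where
  "vis_edge p n u v \<longleftrightarrow> u \<le> n \<and> v \<le> n \<and> (sees p u v \<or> sees p v u)"

definition closed_nbhd :: "(nat \<Rightarrow> real \<times> real) \<Rightarrow> nat \<Rightarrow> nat \<Rightarrow> nat set" where
  "closed_nbhd p n v = {u. u \<le> n \<and> v \<le> n \<and> (u = v \<or> vis_edge p n u v)}"

definition convex_vertex :: "(nat \<Rightarrow> real \<times> real) \<Rightarrow> nat \<Rightarrow> nat \<Rightarrow> bool" where
  "convex_vertex p n k \<longleftrightarrow> 0 < k \<and> k < n \<and> sees p (k - 1) (k + 1)"

definition funnel :: "(nat \<Rightarrow> real \<times> real) \<Rightarrow> nat \<Rightarrow> nat \<Rightarrow> bool" where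
  "funnel p n b \<longleftrightarrow> terrain p n \<and> {k. convex_vertex p n k} = {b} \<and> sees p 0 n"

text \<open>Chains: lambda_i = b - i (i = 0..b, so n_L = b), rho_i = b + i (i = 0..n-b,
  so n_R = n - b).  L_l = {lambda_0..lambda_l}, R_r = {rho_0..rho_r}, with l, r = -1
  giving the empty set.\<close>
definition chainL :: "nat \<Rightarrow> int \<Rightarrow> nat set" where
  "chainL b l = {k. k \<le> b \<and> int (b - k) \<le> l}"

definition chainR :: "nat \<Rightarrow> int \<Rightarrow> nat set" where
  "chainR b r = {k. b \<le> k \<and> int (k - b) \<le> r}"

definition is_base :: "nat \<Rightarrow> nat \<Rightarrow> nat set \<Rightarrow> bool" where
  "is_base n b U \<longleftrightarrow> (\<exists>l r. -1 \<le> l \<and> l \<le> int b \<and> -1 \<le> r \<and> r \<le> int (n - b) \<and>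
                          U = chainL b l \<union> chainR b r)"

end

theory Submission
  imports Defs
begin

definition sl :: "(nat \<Rightarrow> real \<times> real) \<Rightarrow> nat \<Rightarrow> nat \<Rightarrow> real" where
  "sl p i j = (snd (p j) - snd (p i)) / (fst (p j) - fst (p i))"

lemma sl_mult: "fst (p i) \<noteq> fst (p j) \<Longrightarrow> sl p i j * (fst (p j) - fst (p i)) = snd (p j) - snd (p i)"
  unfolding sl_def by simp

lemma id1:
  assumes "fst (p i) < fst (p k)" "fst (p k) < fst (p j)"
  shows "(sl p i j - sl p i k) * (fst (p j) - fst (p i)) = (sl p k j - sl p i k) * (fst (p j) - fst (p k))"
proof -
  have a: "sl p i j * (fst (p j) - fst (p i)) = snd (p j) - snd (p i)" using assms by (intro sl_mult) auto
  have b: "sl p i k * (fst (p k) - fst (p i)) = snd (p k) - snd (p i)" using assms by (intro sl_mult) auto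
  have c: "sl p k j * (fst (p j) - fst (p k)) = snd (p j) - snd (p k)" using assms by (intro sl_mult) auto
  show ?thesis using a b c by (simp add: algebra_simps)
qed

lemma id2:
  assumes "fst (p i) < fst (p k)" "fst (p k) < fst (p j)"
  shows "(sl p k j - sl p i j) * (fst (p j) - fst (p i)) = (sl p k j - sl p i k) * (fst (p k) - fst (p i))"
proof -
  have a: "sl p i j * (fst (p j) - fst (p i)) = snd (p j) - snd (p i)" using assms by (intro sl_mult) auto
  have b: "sl p i k * (fst (p k) - fst (p i)) = snd (p k) - snd (p i)" using assms by (intro sl_mult) auto
  have c: "sl p k j * (fst (p j) - fst (p k)) = snd (p j) - snd (p k)" using assms by (intro sl_mult) auto
  show ?thesis using a b c by (simp add: algebra_simps)
qed

lemma sign_eq: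
  fixes P Q a c :: real
  assumes "P * a = Q * c" "a > 0" "c > 0"
  shows "(P > 0 \<longleftrightarrow> Q > 0) \<and> (P < 0 \<longleftrightarrow> Q < 0)"
proof -
  have "P > 0 \<longleftrightarrow> P * a > 0" using assms(2) by (simp add: zero_less_mult_iff)
  moreover have "Q > 0 \<longleftrightarrow> Q * c > 0" using assms(3) by (simp add: zero_less_mult_iff)
  moreover have "P < 0 \<longleftrightarrow> P * a < 0" using assms(2) by (simp add: mult_less_0_iff)
  moreover have "Q < 0 \<longleftrightarrow> Q * c < 0" using assms(3) by (simp add: mult_less_0_iff)
  ultimately show ?thesis using assms(1) by metis
qed

lemma L3:
  assumes "fst (p i) < fst (p k)" "fst (p k) < fst (p j)"
  shows "sl p i k < sl p i j \<longleftrightarrow> sl p i k < sl p k j"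
    and "sl p i j < sl p k j \<longleftrightarrow> sl p i k < sl p k j"
    and "sl p i j < sl p i k \<longleftrightarrow> sl p k j < sl p i k"
    and "sl p k j < sl p i j \<longleftrightarrow> sl p k j < sl p i k"
    and "sl p i j \<le> max (sl p i k) (sl p k j)"
    and "min (sl p i k) (sl p k j) \<le> sl p i j"
proof -
  have s1: "(sl p i j - sl p i k > 0 \<longleftrightarrow> sl p k j - sl p i k > 0) \<and> (sl p i j - sl p i k < 0 \<longleftrightarrow> sl p k j - sl p i k < 0)"
    by (rule sign_eq[OF id1[OF assms]]) (use assms in auto)
  have s2: "(sl p k j - sl p i j > 0 \<longleftrightarrow> sl p k j - sl p i k > 0) \<and> (sl p k j - sl p i j < 0 \<longleftrightarrow> sl p k j - sl p i k < 0)"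
    by (rule sign_eq[OF id2[OF assms]]) (use assms in auto)
  show "sl p i k < sl p i j \<longleftrightarrow> sl p i k < sl p k j" using s1 by linarith
  show "sl p i j < sl p k j \<longleftrightarrow> sl p i k < sl p k j" using s2 by linarith
  show "sl p i j < sl p i k \<longleftrightarrow> sl p k j < sl p i k" using s1 by linarith
  show "sl p k j < sl p i j \<longleftrightarrow> sl p k j < sl p i k" using s2 by linarith
  show "sl p i j \<le> max (sl p i k) (sl p k j)" using s1 s2 by (simp add: max_def) linarith
  show "min (sl p i k) (sl p k j) \<le> sl p i j" using s1 s2 by (simp add: min_def) linarith
qed

lemma below_sl:
  assumes "fst (p i) < fst (p k)" "fst (p i) < fst (p j)"
  shows "below_seg p i j k \<longleftrightarrow> sl p i k < sl p i j"
proof -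
  have b: "sl p i k * (fst (p k) - fst (p i)) = snd (p k) - snd (p i)" using assms by (intro sl_mult) auto
  have e: "(snd (p j) - snd (p i)) * (fst (p k) - fst (p i)) / (fst (p j) - fst (p i)) = sl p i j * (fst (p k) - fst (p i))"
    unfolding sl_def by simp
  have "below_seg p i j k \<longleftrightarrow> sl p i k * (fst (p k) - fst (p i)) < sl p i j * (fst (p k) - fst (p i))"
    unfolding below_seg_def e using b by linarith
  also have "\<dots> \<longleftrightarrow> sl p i k < sl p i j" using assms by (simp add: mult_less_cancel_right)
  finally show ?thesis .
qed

locale fun_loc =
  fixes p :: "nat \<Rightarrow> real \<times> real" and n b :: nat
  assumes F: "funnel p n b"
begin

lemma xmono: "i < j \<Longrightarrow> j \<le> n \<Longrightarrow> fst (p i) < fst (p j)"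
  using F unfolding funnel_def terrain_def by blast

lemma conv: "0 < b" "b < n" "sees p (b - 1) (b + 1)"
proof -
  have "b \<in> {k. convex_vertex p n k}" using F unfolding funnel_def by blast
  then show "0 < b" "b < n" "sees p (b - 1) (b + 1)" unfolding convex_vertex_def by auto
qed

lemma L3':
  assumes "i < k" "k < j" "j \<le> n"
  shows "sl p i k < sl p i j \<longleftrightarrow> sl p i k < sl p k j"
    and "sl p i j < sl p k j \<longleftrightarrow> sl p i k < sl p k j"
    and "sl p i j < sl p i k \<longleftrightarrow> sl p k j < sl p i k"
    and "sl p k j < sl p i j \<longleftrightarrow> sl p k j < sl p i k"
    and "sl p i j \<le> max (sl p i k) (sl p k j)"
    and "min (sl p i k) (sl p k j) \<le> sl p i j"
proof -
  have a: "fst (p i) < fst (p k)" "fst (p k) < fst (p j)" using assms xmono by auto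
  show "sl p i k < sl p i j \<longleftrightarrow> sl p i k < sl p k j"
    and "sl p i j < sl p k j \<longleftrightarrow> sl p i k < sl p k j"
    and "sl p i j < sl p i k \<longleftrightarrow> sl p k j < sl p i k"
    and "sl p k j < sl p i j \<longleftrightarrow> sl p k j < sl p i k"
    and "sl p i j \<le> max (sl p i k) (sl p k j)"
    and "min (sl p i k) (sl p k j) \<le> sl p i j" using L3[OF a] by auto
qed

lemma below: "i < k \<Longrightarrow> i < j \<Longrightarrow> j \<le> n \<Longrightarrow> k \<le> n \<Longrightarrow> below_seg p i j k \<longleftrightarrow> sl p i k < sl p i j"
  by (rule below_sl) (auto intro: xmono)

lemma refl: assumes "0 < k" "k < n" "k \<noteq> b" shows "sl p k (k + 1) \<le> sl p (k - 1) k"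
proof -
  have "\<not> convex_vertex p n k" using F assms unfolding funnel_def by auto
  then have "\<not> sees p (k - 1) (k + 1)" using assms unfolding convex_vertex_def by auto
  moreover have "below_seg p (k - 1) (k + 1) k \<Longrightarrow> sees p (k - 1) (k + 1)"
  proof -
    assume bl: "below_seg p (k - 1) (k + 1) k"
    have "\<And>k'. k - 1 < k' \<Longrightarrow> k' < k + 1 \<Longrightarrow> k' = k" using assms by auto
    then show ?thesis unfolding sees_def using bl by auto
  qed
  ultimately have "\<not> below_seg p (k - 1) (k + 1) k" by blast
  then have "\<not> sl p (k - 1) k < sl p (k - 1) (k + 1)" using assms by (subst (asm) below) auto
  then have "\<not> sl p (k - 1) k < sl p k (k + 1)" using L3'(1)[of "k - 1" k "k + 1"] assms
    by (metis One_nat_def Suc_eq_plus1 Suc_leI Suc_pred diff_less less_Suc_eq zero_less_one)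
  then show ?thesis by simp
qed

definition st :: "nat \<Rightarrow> nat \<Rightarrow> bool" where
  "st u v \<longleftrightarrow> (\<forall>k. u < k \<and> k < v \<longrightarrow> sl p k (k + 1) \<le> sl p (k - 1) k)"

lemma st_ok: assumes "v \<le> n" "v \<le> b \<or> b \<le> u" shows "st u v"
  unfolding st_def
proof (intro allI impI)
  fix k assume "u < k \<and> k < v"
  then show "sl p k (k + 1) \<le> sl p (k - 1) k" using assms by (intro refl) auto
qed

lemma st_sub: "st u v \<Longrightarrow> u \<le> u' \<Longrightarrow> v' \<le> v \<Longrightarrow> st u' v'"
  unfolding st_def by auto

lemma mono_sl: "st u v \<Longrightarrow> u \<le> i \<Longrightarrow> i \<le> j \<Longrightarrow> j < v \<Longrightarrow> sl p j (j + 1) \<le> sl p i (i + 1)"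
proof (induction j)
  case 0 then show ?case by simp
next
  case (Suc j)
  show ?case
  proof (cases "i = Suc j")
    case True then show ?thesis by simp
  next
    case False
    then have "sl p j (j + 1) \<le> sl p i (i + 1)" using Suc by auto
    moreover have "u < Suc j" using Suc.prems False by auto
    then have "sl p (Suc j) (Suc j + 1) \<le> sl p (Suc j - 1) (Suc j)"
      using Suc.prems unfolding st_def by blast
    ultimately show ?thesis by simp
  qed
qed

lemma tanL: "st u v \<Longrightarrow> u < v \<Longrightarrow> v \<le> n \<Longrightarrow> sl p (v - 1) v \<le> sl p u v"
proof (induction v)
  case 0 then show ?case by simp
next
  case (Suc v)
  show ?case
  proof (cases "u = v")
    case True then show ?thesis by simp
  next
    case False
    then have uv: "u < v" using Suc by auto
    have "sl p (v - 1) v \<le> sl p u v" using Suc uv st_sub[of u "Suc v" u v] by auto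
    moreover have "sl p v (v + 1) \<le> sl p (v - 1) v" using Suc.prems uv unfolding st_def by auto
    moreover have "sl p u (v + 1) < sl p v (v + 1) \<longleftrightarrow> sl p u v < sl p v (v + 1)"
      using L3'(2)[of u v "v + 1"] uv Suc.prems by auto
    ultimately show ?thesis by auto
  qed
qed

lemma tanR: "st u v \<Longrightarrow> u < v \<Longrightarrow> v \<le> n \<Longrightarrow> sl p u v \<le> sl p u (u + 1)"
proof (induction v)
  case 0 then show ?case by simp
next
  case (Suc v)
  show ?case
  proof (cases "u = v")
    case True then show ?thesis by simp
  next
    case False
    then have uv: "u < v" using Suc by auto
    have 1: "sl p u v \<le> sl p u (u + 1)" using Suc uv st_sub[of u "Suc v" u v] by auto
    have 2: "sl p v (v + 1) \<le> sl p u (u + 1)" using mono_sl[of u "Suc v" u v] Suc.prems uv by auto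
    have "sl p u (v + 1) \<le> max (sl p u v) (sl p v (v + 1))"
      using L3'(5)[of u v "v + 1"] uv Suc.prems by auto
    then show ?thesis using 1 2 by auto
  qed
qed

lemma chord: "st u w \<Longrightarrow> u < v \<Longrightarrow> v < w \<Longrightarrow> w \<le> n \<Longrightarrow> sl p v w \<le> sl p u v"
proof -
  assume a: "st u w" "u < v" "v < w" "w \<le> n"
  have "sl p (v - 1) v \<le> sl p u v" using tanL[of u v] a st_sub[of u w u v] by auto
  moreover have "sl p v w \<le> sl p v (v + 1)" using tanR[of v w] a st_sub[of u w v w] by auto
  moreover have "sl p v (v + 1) \<le> sl p (v - 1) v" using a unfolding st_def by auto
  ultimately show ?thesis by auto
qed


lemma seesD: "sees p u v \<Longrightarrow> u < k \<Longrightarrow> k < v \<Longrightarrow> v \<le> n \<Longrightarrow> sl p u k < sl p u v"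
  unfolding sees_def using below by auto

lemma char:
  assumes "u < b" "b < v" "v \<le> n"
  shows "sees p u v \<longleftrightarrow> sl p u (u + 1) < sl p u v \<and> sl p u v < sl p (v - 1) v"
proof
  assume s: "sees p u v"
  have "sl p u (u + 1) < sl p u v" using seesD[OF s] assms by auto
  moreover have "sl p u (v - 1) < sl p u v" using seesD[OF s, of "v - 1"] assms by auto
  then have "sl p u v < sl p (v - 1) v"
    using L3'(1,2)[of u "v - 1" v] assms by auto
  ultimately show "sl p u (u + 1) < sl p u v \<and> sl p u v < sl p (v - 1) v" by blast
next
  assume h: "sl p u (u + 1) < sl p u v \<and> sl p u v < sl p (v - 1) v"
  show "sees p u v" unfolding sees_def
  proof (intro conjI allI impI)
    show "u < v" using assms by auto
    fix k assume k: "u < k \<and> k < v"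
    show "below_seg p u v k"
    proof (cases "k \<le> b")
      case True
      have "st u k" using True assms k by (intro st_ok) auto
      then have "sl p u k \<le> sl p u (u + 1)" using tanR[of u k] k assms by auto
      then show ?thesis using h k assms by (subst below) auto
    next
      case False
      have "st k v" using False assms k by (intro st_ok) auto
      then have "sl p (v - 1) v \<le> sl p k v" using tanL[of k v] k assms by auto
      then have "sl p u k < sl p u v" using h L3'(1,2)[of u k v] k assms by auto
      then show ?thesis using k assms by (subst below) auto
    qed
  qed
qed

lemma same: assumes "u + 2 \<le> v" "v \<le> n" "v \<le> b \<or> b \<le> u" shows "\<not> sees p u v"
proof
  assume s: "sees p u v"
  have "sl p u (u + 1) < sl p u v" using seesD[OF s] assms by auto
  moreover have "st u v" using assms by (intro st_ok) auto
  then have "sl p u v \<le> sl p u (u + 1)" using tanR[of u v] assms by auto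
  ultimately show False by simp
qed

definition C :: "nat \<Rightarrow> nat \<Rightarrow> bool" where
  "C u v \<longleftrightarrow> u < b \<and> b < v \<and> v \<le> n \<and> sees p u v"

lemma Cchar: "C u v \<longleftrightarrow> u < b \<and> b < v \<and> v \<le> n \<and> sl p u (u + 1) < sl p u v \<and> sl p u v < sl p (v - 1) v"
  unfolding C_def using char by blast

lemma RI: assumes "C u v1" "C u v3" "v1 \<le> v2" "v2 \<le> v3" shows "C u v2"
proof (cases "v2 = v1 \<or> v2 = v3")
  case True then show ?thesis using assms by auto
next
  case False
  then have lt: "v1 < v2" "v2 < v3" using assms by auto
  have b: "u < b" "b < v1" "v3 \<le> n" using assms unfolding C_def by auto
  have s3: "sees p u v3" using assms unfolding C_def by auto
  have c1: "sl p u (u + 1) < sl p u v1" and c3: "sl p u (u + 1) < sl p u v3"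
    using assms unfolding Cchar by auto
  have "sl p u v2 < sl p u v3" using seesD[OF s3, of v2] lt b by auto
  then have q1: "sl p u v2 < sl p v2 v3" using L3'(1)[of u v2 v3] lt b by auto
  have "st (v2 - 1) v3" using lt b by (intro st_ok) auto
  then have "sl p (v2 - 1) v3 \<le> sl p (v2 - 1) v2" using tanR[of "v2 - 1" v3] lt b by auto
  then have "sl p v2 v3 \<le> sl p (v2 - 1) v2" using L3'(1)[of "v2 - 1" v2 v3] lt b by auto
  with q1 have Q: "sl p u v2 < sl p (v2 - 1) v2" by simp
  have P: "sl p u (u + 1) < sl p u v2"
  proof (rule ccontr)
    assume n: "\<not> ?thesis"
    have e1: "sl p u v2 < sl p u v1 \<longleftrightarrow> sl p v1 v2 < sl p u v1" using L3'(3)[of u v1 v2] lt b by auto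
    have e2: "sl p v1 v2 < sl p u v2 \<longleftrightarrow> sl p v1 v2 < sl p u v1" using L3'(4)[of u v1 v2] lt b by auto
    have e3: "sl p v2 v3 \<le> sl p v1 v2" using chord[of v1 v3 v2] lt b st_ok[of v3 v1] by auto
    have e4: "sl p u v3 < sl p u v2 \<longleftrightarrow> sl p v2 v3 < sl p u v2" using L3'(3)[of u v2 v3] lt b by auto
    show False using n c1 c3 e1 e2 e3 e4 by linarith
  qed
  show ?thesis unfolding Cchar using P Q b lt by auto
qed

lemma CI: assumes "C u1 v" "C u3 v" "u1 \<le> u2" "u2 \<le> u3" shows "C u2 v"
proof (cases "u2 = u1 \<or> u2 = u3")
  case True then show ?thesis using assms by auto
next
  case False
  then have lt: "u1 < u2" "u2 < u3" using assms by auto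
  have b: "u3 < b" "b < v" "v \<le> n" using assms unfolding C_def by auto
  have s1: "sees p u1 v" using assms unfolding C_def by auto
  have c1: "sl p u1 v < sl p (v - 1) v" and c3: "sl p u3 v < sl p (v - 1) v"
    using assms unfolding Cchar by auto
  have "st u1 (u2 + 1)" using lt b by (intro st_ok) auto
  then have "sl p u2 (u2 + 1) \<le> sl p u1 (u2 + 1)" using tanL[of u1 "u2 + 1"] lt b by auto
  then have p1: "sl p u2 (u2 + 1) \<le> sl p u1 u2" using L3'(2)[of u1 u2 "u2 + 1"] lt b by auto
  have "sl p u1 u2 < sl p u1 v" using seesD[OF s1, of u2] lt b by auto
  then have "sl p u1 u2 < sl p u2 v" using L3'(1)[of u1 u2 v] lt b by auto
  with p1 have P: "sl p u2 (u2 + 1) < sl p u2 v" by simp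
  have Q: "sl p u2 v < sl p (v - 1) v"
  proof (rule ccontr)
    assume n: "\<not> ?thesis"
    have e1: "sl p u3 v < sl p u2 v \<longleftrightarrow> sl p u3 v < sl p u2 u3" using L3'(4)[of u2 u3 v] lt b by auto
    have e2: "sl p u2 v < sl p u2 u3 \<longleftrightarrow> sl p u3 v < sl p u2 u3" using L3'(3)[of u2 u3 v] lt b by auto
    have e3: "sl p u2 u3 \<le> sl p u1 u2" using chord[of u1 u3 u2] lt b st_ok[of u3 u1] by auto
    have e4: "min (sl p u1 u2) (sl p u2 v) \<le> sl p u1 v" using L3'(6)[of u1 u2 v] lt b by auto
    show False using n c1 c3 e1 e2 e3 e4 by (simp add: min_def split: if_splits)
  qed
  show ?thesis unfolding Cchar using P Q b lt by auto
qed

lemma X: assumes "u' \<le> u" "v \<le> v'" "C u v'" "C u' v" shows "C u v \<and> C u' v'"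
proof (cases "u' = u \<or> v = v'")
  case True then show ?thesis using assms by auto
next
  case False
  then have lt: "u' < u" "v < v'" using assms by auto
  have b: "u < b" "b < v" "v' \<le> n" using assms unfolding C_def by auto
  have s1: "sees p u v'" and s2: "sees p u' v" using assms unfolding C_def by auto
  have cuv': "sl p u v' < sl p (v' - 1) v'" and cu'v: "sl p u' (u' + 1) < sl p u' v"
    using assms unfolding Cchar by auto
  have "st u' (u + 1)" using lt b by (intro st_ok) auto
  then have "sl p u (u + 1) \<le> sl p u' (u + 1)" using tanL[of u' "u + 1"] lt b by auto
  then have p1: "sl p u (u + 1) \<le> sl p u' u" using L3'(2)[of u' u "u + 1"] lt b by auto
  have "sl p u' u < sl p u' v" using seesD[OF s2, of u] lt b by auto
  then have p2: "sl p u' u < sl p u v" and p3: "sl p u' v < sl p u v"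
    using L3'(1,2)[of u' u v] lt b by auto
  have "sl p u v < sl p u v'" using seesD[OF s1, of v] lt b by auto
  then have q1: "sl p u v < sl p v v'" and q1': "sl p u v < sl p u v'" using L3'(1)[of u v v'] lt b by auto
  have "st (v - 1) v'" using lt b by (intro st_ok) auto
  then have "sl p (v - 1) v' \<le> sl p (v - 1) v" using tanR[of "v - 1" v'] lt b by auto
  then have q2: "sl p v v' \<le> sl p (v - 1) v" using L3'(1)[of "v - 1" v v'] lt b by auto
  have C1: "C u v" unfolding Cchar using p1 p2 q1 q2 lt b by auto
  have m1: "min (sl p u' v) (sl p v v') \<le> sl p u' v'" using L3'(6)[of u' v v'] lt b by auto
  have m2: "sl p u' v' \<le> max (sl p u' u) (sl p u v')" using L3'(5)[of u' u v'] lt b by auto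
  have P: "sl p u' (u' + 1) < sl p u' v'" using m1 cu'v p3 q1 by (simp add: min_def split: if_splits)
  have Q: "sl p u' v' < sl p (v' - 1) v'" using m2 p2 q1' cuv' by (simp add: max_def split: if_splits)
  have C2: "C u' v'" unfolding Cchar using P Q lt b by auto
  show ?thesis using C1 C2 by blast
qed

lemma C_bounds: "C u v \<Longrightarrow> u < b \<and> b < v \<and> v \<le> n"
  unfolding C_def by auto

lemma C_conv: "C (b - 1) (b + 1)"
  unfolding C_def using conv by auto

lemma sees_char: "u < v \<Longrightarrow> v \<le> n \<Longrightarrow> sees p u v \<longleftrightarrow> v = u + 1 \<or> C u v"
proof -
  assume a: "u < v" "v \<le> n"
  show ?thesis
  proof (cases "v = u + 1")
    case True then show ?thesis unfolding sees_def by auto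
  next
    case False
    then have "u + 2 \<le> v" using a by auto
    then have "sees p u v \<Longrightarrow> u < b \<and> b < v" using same[of u v] a by (meson not_le)
    then show ?thesis using a False unfolding C_def by auto
  qed
qed

lemma nbhd_char: "u \<in> closed_nbhd p n d \<longleftrightarrow> u \<le> n \<and> d \<le> n \<and> (u = d \<or> u = d + 1 \<or> d = u + 1 \<or> C u d \<or> C d u)"
  unfolding closed_nbhd_def vis_edge_def
  using sees_char[of u d] sees_char[of d u] C_bounds[of u d] C_bounds[of d u]
  by (auto simp: sees_def)


abbreviation N :: "nat \<Rightarrow> nat set" where "N d \<equiv> closed_nbhd p n d"

definition upL :: "nat \<Rightarrow> nat set \<Rightarrow> bool" where
  "upL A X \<longleftrightarrow> (\<forall>k\<in>X. A \<le> k \<and> k \<le> b \<longrightarrow> (\<forall>k'. A \<le> k' \<and> k' \<le> k \<longrightarrow> k' \<in> X))"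

definition upR :: "nat \<Rightarrow> nat set \<Rightarrow> bool" where
  "upR B X \<longleftrightarrow> (\<forall>k\<in>X. b \<le> k \<and> k \<le> B \<longrightarrow> (\<forall>k'. k \<le> k' \<and> k' \<le> B \<longrightarrow> k' \<in> X))"

lemma claim1: assumes "A \<le> b" "dl \<in> N A" shows "upL A (N dl)"
  unfolding upL_def
proof (intro ballI impI allI)
  fix k k' assume k: "k \<in> N dl" "A \<le> k \<and> k \<le> b" and k': "A \<le> k' \<and> k' \<le> k"
  have dln: "dl \<le> n" "A \<le> n" and dlc: "dl = A \<or> dl = A + 1 \<or> A = dl + 1 \<or> C dl A \<or> C A dl"
    using assms(2) by (auto simp: nbhd_char)
  have kc: "k = dl \<or> k = dl + 1 \<or> dl = k + 1 \<or> C k dl \<or> C dl k" using k by (auto simp: nbhd_char)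
  have nCdlA: "\<not> C dl A" using C_bounds[of dl A] assms by auto
  show "k' \<in> N dl"
  proof (cases "C A dl")
    case True
    then have bd: "b < dl" using C_bounds by blast
    have "C k dl \<or> (dl = k + 1 \<and> k = b)" using kc k bd C_bounds[of dl k] by auto
    then show ?thesis
    proof
      assume "C k dl"
      then have "C k' dl" using CI[OF True, of k k'] k' by auto
      then show ?thesis using dln C_bounds[of k' dl] by (auto simp: nbhd_char)
    next
      assume h: "dl = k + 1 \<and> k = b"
      show ?thesis
      proof (cases "k' = b")
        case True then show ?thesis using h dln by (auto simp: nbhd_char)
      next
        case False
        have "C k' (b + 1)" using CI[of A "b + 1" "b - 1" k'] True h C_conv k' False by auto
        then show ?thesis using h dln C_bounds[of k' dl] by (auto simp: nbhd_char)
      qed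
    qed
  next
    case False
    then have d3: "dl = A \<or> dl = A + 1 \<or> A = dl + 1" using dlc nCdlA by auto
    have "\<not> C dl k" using C_bounds[of dl k] k by auto
    then have "k = dl \<or> k = dl + 1 \<or> dl = k + 1 \<or> (C k dl \<and> k = b)"
      using kc d3 C_bounds[of k dl] k assms by auto
    then have "k' = k \<or> k' = dl \<or> k' = dl + 1 \<or> dl = k' + 1" using d3 k k' C_bounds[of k dl] assms by auto
    then show ?thesis using k dln k' by (auto simp: nbhd_char)
  qed
qed

lemma claim2: assumes "b \<le> B" "B \<le> n" "dr \<in> N B" shows "upR B (N dr)"
  unfolding upR_def
proof (intro ballI impI allI)
  fix k k' assume k: "k \<in> N dr" "b \<le> k \<and> k \<le> B" and k': "k \<le> k' \<and> k' \<le> B"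
  have drn: "dr \<le> n" and drc: "dr = B \<or> dr = B + 1 \<or> B = dr + 1 \<or> C dr B \<or> C B dr"
    using assms(3) by (auto simp: nbhd_char)
  have kc: "k = dr \<or> k = dr + 1 \<or> dr = k + 1 \<or> C k dr \<or> C dr k" using k by (auto simp: nbhd_char)
  have nCBdr: "\<not> C B dr" using C_bounds[of B dr] assms by auto
  show "k' \<in> N dr"
  proof (cases "C dr B")
    case True
    then have bd: "dr < b" using C_bounds by blast
    have "C dr k \<or> (k = dr + 1 \<and> k = b)" using kc k bd C_bounds[of k dr] by auto
    then show ?thesis
    proof
      assume "C dr k"
      then have "C dr k'" using RI[OF _ True, of k k'] k' by auto
      then show ?thesis using drn C_bounds[of dr k'] by (auto simp: nbhd_char)
    next
      assume h: "k = dr + 1 \<and> k = b"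
      show ?thesis
      proof (cases "k' = b")
        case True then show ?thesis using h drn assms k' by (auto simp: nbhd_char)
      next
        case False
        have "C (b - 1) k'" using RI[of "b - 1" "b + 1" B k'] True h C_conv k' False by auto
        then show ?thesis using h drn C_bounds[of dr k'] by (auto simp: nbhd_char)
      qed
    qed
  next
    case False
    then have d3: "dr = B \<or> dr = B + 1 \<or> B = dr + 1" using drc nCBdr by auto
    have "\<not> C k dr" using C_bounds[of k dr] k by auto
    then have "k = dr \<or> k = dr + 1 \<or> dr = k + 1 \<or> (C dr k \<and> k = b)"
      using kc d3 C_bounds[of dr k] k assms by auto
    then have "k' = k \<or> k' = dr \<or> k' = dr + 1 \<or> dr = k' + 1" using d3 k k' C_bounds[of dr k] assms by auto
    then show ?thesis using k drn k' assms by (auto simp: nbhd_char)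
  qed
qed


lemma main_comb:
  assumes AB: "A \<le> b" "b \<le> B" "B \<le> n" and dl: "dl \<in> N A" and dr: "dr \<in> N B"
  shows "(upL A (N dl) \<and> upR B (N dl)) \<or> (upL A (N dr) \<and> upR B (N dr))
         \<or> (upL A (N dl \<union> N dr) \<and> upR B (N dl \<union> N dr))"
proof -
  have c1: "upL A (N dl)" using claim1 AB dl by blast
  have c2: "upR B (N dr)" using claim2 AB dr by blast
  consider "upR B (N dl)" | "upL A (N dr)" | "\<not> upR B (N dl) \<and> \<not> upL A (N dr)" by blast
  then show ?thesis
  proof cases
    case 1 then show ?thesis using c1 by blast
  next
    case 2 then show ?thesis using c2 by blast
  next
    case 3
    obtain k0 k0' where k0: "k0 \<in> N dl" "b \<le> k0" "k0 \<le> B" "k0 \<le> k0'" "k0' \<le> B" "k0' \<notin> N dl"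
      using 3 unfolding upR_def by blast
    obtain m m' where m: "m \<in> N dr" "A \<le> m" "m \<le> b" "A \<le> m'" "m' \<le> m" "m' \<notin> N dr"
      using 3 unfolding upL_def by blast
    have mm: "m' < m" using m by (cases "m' = m") auto
    have kk: "k0 < k0'" using k0 by (cases "k0' = k0") auto
    have Ab: "A < b" using m mm by auto
    have bB: "b < B" using k0 kk by auto
    have dln: "dl \<le> n" and drn: "dr \<le> n" using dl dr by (auto simp: nbhd_char)
    have dlc: "dl = A \<or> dl = A + 1 \<or> A = dl + 1 \<or> C A dl"
      using dl C_bounds[of dl A] AB by (auto simp: nbhd_char)
    have drc: "dr = B \<or> dr = B + 1 \<or> B = dr + 1 \<or> C dr B"
      using dr C_bounds[of B dr] AB by (auto simp: nbhd_char)
    have N_C: "\<And>u v. C u v \<Longrightarrow> u \<in> N v \<and> v \<in> N u"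
    proof -
      fix u v assume "C u v"
      then show "u \<in> N v \<and> v \<in> N u" using C_bounds[of u v] by (auto simp: nbhd_char)
    qed
    have N_adj: "\<And>u v. u \<le> n \<Longrightarrow> v \<le> n \<Longrightarrow> v \<le> u + 1 \<Longrightarrow> u \<le> v + 1 \<Longrightarrow> u \<in> N v"
    proof -
      fix u v :: nat assume "u \<le> n" "v \<le> n" "v \<le> u + 1" "u \<le> v + 1"
      moreover have "u = v \<or> u = v + 1 \<or> v = u + 1" using calculation by arith
      ultimately show "u \<in> N v" by (auto simp: nbhd_char)
    qed
    have R: "upR B (N dl \<union> N dr)"
      unfolding upR_def
    proof (intro ballI impI allI)
      fix k k' assume k: "k \<in> N dl \<union> N dr" "b \<le> k \<and> k \<le> B" and k': "k \<le> k' \<and> k' \<le> B"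
      show "k' \<in> N dl \<union> N dr"
      proof (cases "k \<in> N dr")
        case True then show ?thesis using c2 k k' unfolding upR_def by blast
      next
        case False
        then have kdl: "k \<in> N dl" using k by blast
        have kc: "k = dl \<or> k = dl + 1 \<or> dl = k + 1 \<or> C k dl \<or> C dl k" using kdl by (auto simp: nbhd_char)
        have k'n: "k' \<le> n" using k' AB by auto
        show ?thesis
        proof (cases "C A dl")
          case T2: True
          have bdl: "b < dl" using T2 C_bounds by blast
          have k0c: "k0 = dl \<or> k0 = dl + 1 \<or> dl = k0 + 1" using k0 bdl C_bounds[of k0 dl] C_bounds[of dl k0]
            by (auto simp: nbhd_char)
          have "\<not> k0' \<le> dl + 1"
          proof
            assume h: "k0' \<le> dl + 1"
            then have "k0' = dl \<or> k0' = dl + 1 \<or> dl = k0' + 1" using k0 k0c by auto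
            then have "k0' \<in> N dl" using N_adj[of k0' dl] dln AB k0 by fastforce
            then show False using k0 by blast
          qed
          then have "dl + 2 \<le> k0'" by simp
          then have dlB: "dl + 2 \<le> B" using k0 by auto
          have kc2: "k = dl \<or> k = dl + 1 \<or> dl = k + 1" using kc bdl k C_bounds[of k dl] C_bounds[of dl k] by auto
          show ?thesis
          proof (cases "C dr B")
            case D2: True
            have bdr: "dr < b" using D2 C_bounds by blast
            have mc: "m = dr \<or> m = dr + 1 \<or> dr = m + 1" using m bdr C_bounds[of m dr] C_bounds[of dr m]
              by (auto simp: nbhd_char)
            have "\<not> dr \<le> m' + 1"
            proof
              assume h: "dr \<le> m' + 1"
              then have "m' = dr \<or> m' = dr + 1 \<or> dr = m' + 1" using m mc by auto
              then have "m' \<in> N dr" using N_adj[of m' dr] drn AB m by fastforce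
              then show False using m by blast
            qed
            then have "m' + 2 \<le> dr" by simp
            then have Adr: "A \<le> dr" using m by auto
            have "C dr dl" using X[of A dr dl B] Adr dlB D2 T2 by auto
            show ?thesis
            proof (cases "k' \<le> dl + 1")
              case True then show ?thesis using kc2 k k' N_adj[of k' dl] dln k'n by auto
            next
              case False
              have "C dr k'" using RI[OF \<open>C dr dl\<close> D2, of k'] False k' by auto
              then show ?thesis using N_C by blast
            qed
          next
            case D1: False
            have drc': "dr = B \<or> dr = B + 1 \<or> B = dr + 1" using drc D1 by auto
            have mc: "C m dr" using m drc' dlB bdl C_bounds[of dr m] by (auto simp: nbhd_char)
            have "C A dr" using X[of A m dl dr] mc T2 m drc' dlB by auto
            then have "C m' dr" using CI[OF \<open>C A dr\<close> mc, of m'] m by auto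
            then show ?thesis using m N_C by blast
          qed
        next
          case T1: False
          have dlc': "dl = A \<or> dl = A + 1 \<or> A = dl + 1" using dlc T1 by auto
          show ?thesis
          proof (cases "C dr B")
            case D2: True
            have bdr: "dr < b" using D2 C_bounds by blast
            have mc: "m = dr \<or> m = dr + 1 \<or> dr = m + 1" using m bdr C_bounds[of m dr] C_bounds[of dr m]
              by (auto simp: nbhd_char)
            have "\<not> dr \<le> m' + 1"
            proof
              assume h: "dr \<le> m' + 1"
              then have "m' = dr \<or> m' = dr + 1 \<or> dr = m' + 1" using m mc by auto
              then have "m' \<in> N dr" using N_adj[of m' dr] drn AB m by fastforce
              then show False using m by blast
            qed
            then have "m' + 2 \<le> dr" by simp
            then have Adr: "A + 2 \<le> dr" using m by auto
            have kc2: "C dl k" using kc dlc' Adr bdr k C_bounds[of k dl] by auto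
            have "C dr k" using X[of dl dr k B] kc2 D2 dlc' Adr k by auto
            then have "C dr k'" using RI[OF _ D2, of k k'] k' by auto
            then show ?thesis using N_C by blast
          next
            case D1: False
            have drc': "dr = B \<or> dr = B + 1 \<or> B = dr + 1" using drc D1 by auto
            show ?thesis
            proof (cases "dr \<le> b + 1")
              case True
              then show ?thesis using N_adj[of k' dr] drc' k k' drn k'n by auto
            next
              case False
              have mc: "C m dr" using m drc' False C_bounds[of dr m] by (auto simp: nbhd_char)
              show ?thesis
              proof (cases "k' = k")
                case True then show ?thesis using kdl by blast
              next
                case kne: False
                have kdr: "k \<le> dr" using k k' kne drc' by auto
                have "m < b" using mc C_bounds by blast
                then have "C dl k \<or> dl = b - 1" using kc dlc' k Ab C_bounds[of k dl] m mm by auto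
                then have Cdldr: "C dl dr \<and> (C dl k \<or> (dl = b - 1 \<and> k \<le> b + 1 \<and> C dl (b + 1)))"
                proof
                  assume "C dl k"
                  then show ?thesis using X[of dl m k dr] mc dlc' m mm kdr by auto
                next
                  assume "dl = b - 1"
                  then have "m = dl" using m mm dlc' Ab \<open>m < b\<close> by auto
                  then show ?thesis using mc \<open>dl = b - 1\<close> C_conv kc k Ab C_bounds[of dl k] C_bounds[of k dl] by auto
                qed
                show ?thesis
                proof (cases "k' \<le> dr")
                  case True
                  have "C dl k'" using Cdldr True k k' RI[of dl k dr k'] RI[of dl "b + 1" dr k'] kne by auto
                  then show ?thesis using N_C by blast
                next
                  case False
                  then show ?thesis using N_adj[of k' dr] drc' k' drn k'n by auto
                qed
              qed
            qed
          qed
        qed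
      qed
    qed
    have L: "upL A (N dl \<union> N dr)"
      unfolding upL_def
    proof (intro ballI impI allI)
      fix k k' assume k: "k \<in> N dl \<union> N dr" "A \<le> k \<and> k \<le> b" and k': "A \<le> k' \<and> k' \<le> k"
      show "k' \<in> N dl \<union> N dr"
      proof (cases "k \<in> N dl")
        case True then show ?thesis using c1 k k' unfolding upL_def by blast
      next
        case False
        then have kdr: "k \<in> N dr" using k by blast
        have kc: "k = dr \<or> k = dr + 1 \<or> dr = k + 1 \<or> C k dr \<or> C dr k" using kdr by (auto simp: nbhd_char)
        have k'n: "k' \<le> n" using k' k AB by auto
        show ?thesis
        proof (cases "C A dl")
          case T2: True
          have bdl: "b < dl" using T2 C_bounds by blast
          have k0c: "k0 = dl \<or> k0 = dl + 1 \<or> dl = k0 + 1" using k0 bdl C_bounds[of k0 dl] C_bounds[of dl k0]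
            by (auto simp: nbhd_char)
          have "\<not> k0' \<le> dl + 1"
          proof
            assume h: "k0' \<le> dl + 1"
            then have "k0' = dl \<or> k0' = dl + 1 \<or> dl = k0' + 1" using k0 k0c by auto
            then have "k0' \<in> N dl" using N_adj[of k0' dl] dln AB k0 by fastforce
            then show False using k0 by blast
          qed
          then have "dl + 2 \<le> k0'" by simp
          then have dlB: "dl + 2 \<le> B" using k0 by auto
          show ?thesis
          proof (cases "C dr B")
            case D2: True
            have bdr: "dr < b" using D2 C_bounds by blast
            have mc: "m = dr \<or> m = dr + 1 \<or> dr = m + 1" using m bdr C_bounds[of m dr] C_bounds[of dr m]
              by (auto simp: nbhd_char)
            have "\<not> dr \<le> m' + 1"
            proof
              assume h: "dr \<le> m' + 1"
              then have "m' = dr \<or> m' = dr + 1 \<or> dr = m' + 1" using m mc by auto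
              then have "m' \<in> N dr" using N_adj[of m' dr] drn AB m by fastforce
              then show False using m by blast
            qed
            then have "m' + 2 \<le> dr" by simp
            then have Adr: "A \<le> dr" using m by auto
            have "C dr dl" using X[of A dr dl B] Adr dlB D2 T2 by auto
            have kc2: "k = dr \<or> k = dr + 1 \<or> dr = k + 1" using kc bdr k C_bounds[of k dr] C_bounds[of dr k] by auto
            show ?thesis
            proof (cases "dr \<le> k' + 1")
              case True then show ?thesis using kc2 k k' N_adj[of k' dr] drn k'n by auto
            next
              case False
              have "C k' dl" using CI[OF T2 \<open>C dr dl\<close>, of k'] False k' by auto
              then show ?thesis using N_C by blast
            qed
          next
            case D1: False
            have drc': "dr = B \<or> dr = B + 1 \<or> B = dr + 1" using drc D1 by auto
            have kc2: "C k dr" using kc drc' dlB bdl k C_bounds[of dr k] by auto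
            have "C k dl" using X[of A k dl dr] kc2 T2 k drc' dlB by auto
            then have "C k' dl" using CI[OF T2, of k k'] k' by auto
            then show ?thesis using N_C by blast
          qed
        next
          case T1: False
          have dlc': "dl = A \<or> dl = A + 1 \<or> A = dl + 1" using dlc T1 by auto
          show ?thesis
          proof (cases "C dr B")
            case D2: True
            have bdr: "dr < b" using D2 C_bounds by blast
            have mc: "m = dr \<or> m = dr + 1 \<or> dr = m + 1" using m bdr C_bounds[of m dr] C_bounds[of dr m]
              by (auto simp: nbhd_char)
            have "\<not> dr \<le> m' + 1"
            proof
              assume h: "dr \<le> m' + 1"
              then have "m' = dr \<or> m' = dr + 1 \<or> dr = m' + 1" using m mc by auto
              then have "m' \<in> N dr" using N_adj[of m' dr] drn AB m by fastforce
              then show False using m by blast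
            qed
            then have "m' + 2 \<le> dr" by simp
            then have Adr: "A + 2 \<le> dr" using m by auto
            have k0c: "C dl k0" using k0 dlc' Adr bdr C_bounds[of k0 dl] by (auto simp: nbhd_char)
            have "C dl B" using X[of dl dr k0 B] k0c D2 dlc' Adr k0 by auto
            then have "C dl k0'" using RI[OF k0c, of B k0'] k0 by auto
            then show ?thesis using k0 N_C by blast
          next
            case D1: False
            have drc': "dr = B \<or> dr = B + 1 \<or> B = dr + 1" using drc D1 by auto
            show ?thesis
            proof (cases "b \<le> dl + 1")
              case True
              then show ?thesis using N_adj[of k' dl] dlc' k k' dln k'n by auto
            next
              case False
              have k0c: "C dl k0" using k0 dlc' False C_bounds[of k0 dl] by (auto simp: nbhd_char)
              have k0dr: "k0 \<le> dr" using k0 kk drc' by auto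
              show ?thesis
              proof (cases "k' = k")
                case True then show ?thesis using kdr by blast
              next
                case kne: False
                have "b < k0" using k0c C_bounds by blast
                then have "C k dr \<or> dr = b + 1" using kc drc' k bB C_bounds[of dr k] k0 kk by auto
                then have Cdldr: "C dl dr \<and> (C k dr \<or> (dr = b + 1 \<and> k \<ge> b - 1 \<and> C (b - 1) dr))"
                proof
                  assume "C k dr"
                  then show ?thesis using X[of dl k k0 dr] k0c dlc' k k' kne k0dr by auto
                next
                  assume "dr = b + 1"
                  then have "k0 = dr" using k0 kk k0dr C_bounds[of dl k0] k0c by auto
                  then show ?thesis using k0c \<open>dr = b + 1\<close> C_conv kc k bB C_bounds[of k dr] C_bounds[of dr k] by auto
                qed
                show ?thesis
                proof (cases "dl \<le> k'")
                  case True
                  have "C k' dr" using Cdldr True k k' CI[of dl dr k k'] CI[of dl dr "b - 1" k'] kne by auto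
                  then show ?thesis using N_C by blast
                next
                  case False
                  then show ?thesis using N_adj[of k' dl] dlc' k' dln k'n by auto
                qed
              qed
            qed
          qed
        qed
      qed
    qed
    show ?thesis using L R by blast
  qed
qed


lemma base_lemma:
  assumes AB: "A \<le> b" "b \<le> B" "B \<le> n" and W: "W = {k. A \<le> k \<and> k \<le> B}"
    and uL: "upL A X" and uR: "upR B X"
  shows "is_base n b (W - X)"
proof (cases "b \<in> X")
  case True
  have "W \<subseteq> X"
  proof
    fix k assume "k \<in> W"
    then have k: "A \<le> k" "k \<le> B" using W by auto
    show "k \<in> X"
    proof (cases "k \<le> b")
      case True then show ?thesis using uL \<open>b \<in> X\<close> k AB unfolding upL_def by blast
    next
      case False then show ?thesis using uR \<open>b \<in> X\<close> k AB unfolding upR_def by auto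
    qed
  qed
  then have "W - X = chainL b (-1) \<union> chainR b (-1)" unfolding chainL_def chainR_def by auto
  then show ?thesis unfolding is_base_def by (intro exI[of _ "-1"]) auto
next
  case False
  define S where "S = {k. A \<le> k \<and> k \<le> b \<and> k \<notin> X}"
  define T where "T = {k. b \<le> k \<and> k \<le> B \<and> k \<notin> X}"
  have bS: "b \<in> S" using False AB unfolding S_def by auto
  have bT: "b \<in> T" using False AB unfolding T_def by auto
  have fS: "finite S" unfolding S_def by auto
  have fT: "finite T" unfolding T_def by auto
  define \<alpha> where "\<alpha> = Min S"
  define \<beta> where "\<beta> = Max T"
  have aS: "\<alpha> \<in> S" using fS bS unfolding \<alpha>_def by (intro Min_in) auto
  have bT': "\<beta> \<in> T" using fT bT unfolding \<beta>_def by (intro Max_in) auto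
  have Seq: "S = {k. \<alpha> \<le> k \<and> k \<le> b}"
  proof
    show "S \<subseteq> {k. \<alpha> \<le> k \<and> k \<le> b}" using fS unfolding \<alpha>_def S_def by auto
    show "{k. \<alpha> \<le> k \<and> k \<le> b} \<subseteq> S"
    proof
      fix k assume k: "k \<in> {k. \<alpha> \<le> k \<and> k \<le> b}"
      have "k \<notin> X"
      proof
        assume "k \<in> X"
        then have "\<alpha> \<in> X" using uL aS k unfolding upL_def S_def by auto
        then show False using aS unfolding S_def by auto
      qed
      then show "k \<in> S" using k aS unfolding S_def by auto
    qed
  qed
  have Teq: "T = {k. b \<le> k \<and> k \<le> \<beta>}"
  proof
    show "T \<subseteq> {k. b \<le> k \<and> k \<le> \<beta>}" using fT unfolding \<beta>_def T_def by auto
    show "{k. b \<le> k \<and> k \<le> \<beta>} \<subseteq> T"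
    proof
      fix k assume k: "k \<in> {k. b \<le> k \<and> k \<le> \<beta>}"
      have "k \<notin> X"
      proof
        assume "k \<in> X"
        then have "\<beta> \<in> X" using uR bT' k unfolding upR_def T_def by auto
        then show False using bT' unfolding T_def by auto
      qed
      then show "k \<in> T" using k bT' unfolding T_def by auto
    qed
  qed
  have "W - X = S \<union> T" unfolding S_def T_def W using AB by auto
  also have "S = chainL b (int (b - \<alpha>))" unfolding Seq chainL_def using aS unfolding S_def by auto
  also have "T = chainR b (int (\<beta> - b))" unfolding Teq chainR_def using bT' unfolding T_def by auto
  finally have e: "W - X = chainL b (int (b - \<alpha>)) \<union> chainR b (int (\<beta> - b))" .
  have "\<beta> \<le> n" using bT' AB unfolding T_def by auto
  then show ?thesis unfolding is_base_def using e
    by (intro exI[of _ "int (b - \<alpha>)"] exI[of _ "int (\<beta> - b)"]) auto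
qed

end


theorem lemma16:
  fixes p :: "nat \<Rightarrow> real \<times> real" and n b l r dl dr :: nat
  assumes "funnel p n b"
    and "l \<le> b" and "r \<le> n - b"
    and "W = chainL b (int l) \<union> chainR b (int r)"
    and "dl \<in> closed_nbhd p n (b - l)"
    and "dr \<in> closed_nbhd p n (b + r)"
  shows "is_base n b (W - closed_nbhd p n dl) \<or> is_base n b (W - closed_nbhd p n dr)
         \<or> is_base n b (W - (closed_nbhd p n dl \<union> closed_nbhd p n dr))"
proof -
  interpret fun_loc p n b using assms(1) by unfold_locales
  have bn: "b < n" using conv by simp
  have AB: "b - l \<le> b" "b \<le> b + r" "b + r \<le> n" using assms(3) bn by auto
  have W: "W = {k. b - l \<le> k \<and> k \<le> b + r}"
    unfolding assms(4) chainL_def chainR_def using assms(2) by auto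
  have "(upL (b - l) (N dl) \<and> upR (b + r) (N dl)) \<or> (upL (b - l) (N dr) \<and> upR (b + r) (N dr))
         \<or> (upL (b - l) (N dl \<union> N dr) \<and> upR (b + r) (N dl \<union> N dr))"
    using main_comb[OF AB assms(5,6)] .
  then show ?thesis using base_lemma[OF AB W] by blast
qed

end
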